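(* Let $R$ be a $2$-dimensional simply connected cubiculated region. For any two distinct tilings $T_1,T_2$ of $R$, the binomial $B_{T_1,T_2}=y^{T_1}-y^{T_2}$ is generated by quadratics, i.e. lies in the ideal generated by the degree-$2$ binomials of $I_{G_R}$. In particular, $I_{R_{tiling}}\subseteq I_{R_{flip}}$.
   Context: A $2$-dimensional cubiculated region $R$ is a finite union of unit lattice squares in the plane (a homogeneous $2$-dimensional cubical complex); it is simply connected if every simple closed curve in it can be continuously shrunk to a point within it (i.e. it has no holes). A domino is two unit squares of $R$ sharing an edge; a tiling of $R$ is a set of dominoes covering every square exactly once; $\mathcal{T}_R$ is the set of tilings. $G_R$ is the graph with a vertex for each square and an edge between squares sharing an edge; tilings are perfect matchings of $G_R$. In $\mathbb{K}[y_e : e\in E(G_R)]$ write $y^{E_0}=\prod_{e\in E_0}y_e$. $I_{G_R}$ is the kernel of $\mathbb{K}[y_e]\to\mathbb{K}[x_v : v\in V(G_R)]$, $y_{\{i,j\}}\mapsto x_ix_j$; its nonzero degree-$2$ binomials are exactly $y^{D_1}-y^{D_2}$ for local flips $(D_1,D_2)$, where a local flip replaces two adjacent parallel dominoes forming a $2\times2$ square by the two perpendicular dominoes covering the same square (equivalently $D_1\cup D_2$ is a $4$-cycle of $G_R$). The flip ideal is $I_{R_{flip}}=\langle y^{D_1}-y^{D_2} : (D_1,D_2)\text{ a local flip}\rangle$ and the tiling ideal is $I_{R_{tiling}}=\langle y^{T_1}-y^{T_2} : T_1,T_2\in\mathcal{T}_R\rangle$. *)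

theory Defs
  imports "HOL-Analysis.Analysis" "HOL-Library.Poly_Mapping"
begin

text \<open>Unit lattice squares are indexed by their lower-left corner (i,j) :: int \<times> int.
  A 2-dimensional cubiculated region is a finite set R of such squares.\<close>

type_synonym cell = "int \<times> int"

definition unit_square :: "cell \<Rightarrow> (real \<times> real) set" where
  "unit_square c = cbox (real_of_int (fst c), real_of_int (snd c))
                        (real_of_int (fst c) + 1, real_of_int (snd c) + 1)"

definition region_space :: "cell set \<Rightarrow> (real \<times> real) set" where
  "region_space R = (\<Union>c\<in>R. unit_square c)"

text \<open>Simply connected (paper's notion, no connectedness required):
  every closed curve in the set can be contracted to a point within the set.\<close>

definition no_holes :: "(real \<times> real) set \<Rightarrow> bool" where
  "no_holes S \<longleftrightarrow> (\<forall>p. path p \<and> path_image p \<subseteq> S \<and> pathfinish p = pathstart p \<longrightarrow>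
       homotopic_loops S p (linepath (pathstart p) (pathstart p)))"

definition adjacent :: "cell \<Rightarrow> cell \<Rightarrow> bool" where
  "adjacent a b \<longleftrightarrow> \<bar>fst a - fst b\<bar> + \<bar>snd a - snd b\<bar> = 1"

text \<open>Dominoes of R = edges of the graph G_R (an edge is the 2-element set of its endpoints).\<close>

definition dominoes :: "cell set \<Rightarrow> cell set set" where
  "dominoes R = {{a, b} | a b. a \<in> R \<and> b \<in> R \<and> adjacent a b}"

definition tilings :: "cell set \<Rightarrow> cell set set set" where
  "tilings R = {T. T \<subseteq> dominoes R \<and> (\<forall>c\<in>R. \<exists>!d. d \<in> T \<and> c \<in> d)}"

text \<open>Polynomial ring K[y_e] with variables indexed by (potential) edges:
  polynomials are finitely supported maps from exponent vectors to coefficients.\<close>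

type_synonym 'k ypoly = "((cell set \<Rightarrow>\<^sub>0 nat) \<Rightarrow>\<^sub>0 'k)"

definition ymono :: "cell set set \<Rightarrow> 'k::comm_ring_1 ypoly" where
  "ymono E = Poly_Mapping.single (\<Sum>e\<in>E. Poly_Mapping.single e (1::nat)) 1"

definition gen_ideal :: "'a::comm_ring_1 set \<Rightarrow> 'a set" where
  "gen_ideal G = {p. \<exists>n (c :: nat \<Rightarrow> 'a) g. (\<forall>i<n. g i \<in> G) \<and> p = (\<Sum>i<n. c i * g i)}"

definition local_flips :: "cell set \<Rightarrow> (cell set set \<times> cell set set) set" where
  "local_flips R = {(D1, D2) | D1 D2 i j.
      {(i,j), (i+1,j), (i,j+1), (i+1,j+1)} \<subseteq> R \<and>
      ((D1 = {{(i,j),(i+1,j)}, {(i,j+1),(i+1,j+1)}} \<and> D2 = {{(i,j),(i,j+1)}, {(i+1,j),(i+1,j+1)}}) \<or>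
       (D2 = {{(i,j),(i+1,j)}, {(i,j+1),(i+1,j+1)}} \<and> D1 = {{(i,j),(i,j+1)}, {(i+1,j),(i+1,j+1)}}))}"

definition flip_ideal :: "cell set \<Rightarrow> 'k::comm_ring_1 ypoly set" where
  "flip_ideal R = gen_ideal {ymono D1 - ymono D2 | D1 D2. (D1, D2) \<in> local_flips R}"

definition tiling_ideal :: "cell set \<Rightarrow> 'k::comm_ring_1 ypoly set" where
  "tiling_ideal R = gen_ideal {ymono T1 - ymono T2 | T1 T2. T1 \<in> tilings R \<and> T2 \<in> tilings R}"

end

theory Submission
  imports Defs
begin

definition sc :: "cell \<Rightarrow> int" where "sc c = (if even (fst c + snd c) then 1 else -1)"

lemma adj_cases: "adjacent (x,y) q \<longleftrightarrow> q = (x+1,y) \<or> q = (x-1,y) \<or> q = (x,y+1) \<or> q = (x,y-1)"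
  by (cases q) (auto simp: adjacent_def abs_if split: if_splits)

lemma adj_sym: "adjacent p q \<Longrightarrow> adjacent q p"
  by (auto simp: adjacent_def abs_minus_commute)

lemma adj_irrefl: "\<not> adjacent p p"
  by (auto simp: adjacent_def)

lemma sc_adj: "adjacent p q \<Longrightarrow> sc q = - sc p"
  by (cases p; cases q) (auto simp: adj_cases sc_def)

lemma sc_vals: "sc p = 1 \<or> sc p = -1"
  by (auto simp: sc_def)

definition tf :: "cell set set \<Rightarrow> cell \<Rightarrow> cell \<Rightarrow> int" where
  "tf T p q = (if adjacent p q then sc p * (if {p,q} \<in> T then -3 else 1) else 0)"

definition dv :: "(cell \<Rightarrow> cell \<Rightarrow> int) \<Rightarrow> cell \<Rightarrow> int" where
  "dv f c = f c (fst c + 1, snd c) + f c (fst c - 1, snd c) + f c (fst c, snd c + 1) + f c (fst c, snd c - 1)"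

definition antis :: "(cell \<Rightarrow> cell \<Rightarrow> int) \<Rightarrow> bool" where
  "antis f \<longleftrightarrow> (\<forall>p q. f q p = - f p q)"

definition pot :: "int \<Rightarrow> (cell \<Rightarrow> cell \<Rightarrow> int) \<Rightarrow> int \<times> int \<Rightarrow> int" where
  "pot a f v = (\<Sum>i\<in>{a..<fst v}. f (i,a) (i,a-1)) + (\<Sum>j\<in>{a..<snd v}. f (fst v - 1, j) (fst v, j))"

lemma antisI: "(\<And>p q. f q p = - f p q) \<Longrightarrow> antis f"
  unfolding antis_def by blast

lemma antis_tf: "antis (tf T)"
proof (rule antisI)
  fix p q
  show "tf T q p = - tf T p q"
  proof (cases "adjacent p q")
    case True
    have e: "{q,p} = {p,q}" by (rule insert_commute)
    show ?thesis using True adj_sym[OF True] sc_adj[OF True] unfolding tf_def e by simp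
  next
    case False
    then have "\<not> adjacent q p" using adj_sym by blast
    then show ?thesis using False unfolding tf_def by simp
  qed
qed

lemma tf_vals: "adjacent p q \<Longrightarrow> tf T p q = sc p \<or> tf T p q = -3 * sc p"
  by (auto simp: tf_def)



lemma tiling_nb:
  assumes T: "T \<in> tilings R" and c: "c \<in> R"
  obtains n0 where "adjacent c n0" "\<And>n. {c,n} \<in> T \<longleftrightarrow> n = n0"
proof -
  have TT: "T \<subseteq> dominoes R" "\<exists>!d. d \<in> T \<and> c \<in> d" using T c unfolding tilings_def by auto
  obtain d where d: "d \<in> T" "c \<in> d" and du: "\<And>e. e \<in> T \<Longrightarrow> c \<in> e \<Longrightarrow> e = d"
    using TT(2) by metis
  have "d \<in> dominoes R" using TT(1) d by blast
  then obtain p q where pq: "d = {p,q}" "adjacent p q" unfolding dominoes_def by blast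
  define n0 where "n0 = (if c = p then q else p)"
  have dn: "d = {c, n0}" using pq d(2) unfolding n0_def by auto
  have an: "adjacent c n0"
    using pq d(2) unfolding n0_def by (auto intro: adj_sym)
  show ?thesis
  proof (rule that[OF an])
    fix n
    show "{c,n} \<in> T \<longleftrightarrow> n = n0"
    proof
      assume "{c,n} \<in> T"
      then have e: "{c,n} = {c,n0}" using du dn by auto
      have "c \<noteq> n0" using an adj_irrefl by metis
      then show "n = n0" using e by (auto simp: doubleton_eq_iff)
    qed (use d dn in auto)
  qed
qed

lemma tiling_notR:
  assumes T: "T \<in> tilings R" and c: "c \<notin> R"
  shows "{c,n} \<notin> T" "{n,c} \<notin> T"
proof -
  have "T \<subseteq> dominoes R" using T unfolding tilings_def by auto
  moreover have "{c,n} \<notin> dominoes R" "{n,c} \<notin> dominoes R" using c unfolding dominoes_def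
    by (auto simp: doubleton_eq_iff)
  ultimately show "{c,n} \<notin> T" "{n,c} \<notin> T" by auto
qed

lemma dv_tf:
  assumes T: "T \<in> tilings R"
  shows "dv (tf T) c = (if c \<in> R then 0 else 4 * sc c)"
proof -
  obtain x y where Pair: "c = (x,y)" by (cases c)
  have adj4: "adjacent (x,y) (x+1,y)" "adjacent (x,y) (x-1,y)" "adjacent (x,y) (x,y+1)" "adjacent (x,y) (x,y-1)"
    by (simp_all add: adj_cases)
  have dvc: "dv (tf T) c = sc c * ((if {c,(x+1,y)} \<in> T then -3 else 1) + (if {c,(x-1,y)} \<in> T then -3 else 1)
        + (if {c,(x,y+1)} \<in> T then -3 else 1) + (if {c,(x,y-1)} \<in> T then -3 else 1))"
    unfolding dv_def tf_def using adj4 Pair by (simp add: algebra_simps)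
  show ?thesis
  proof (cases "c \<in> R")
    case True
    obtain n0 where n0: "adjacent c n0" "\<And>n. {c,n} \<in> T \<longleftrightarrow> n = n0"
      using tiling_nb[OF T True] by blast
    from n0(1) have "n0 = (x+1,y) \<or> n0 = (x-1,y) \<or> n0 = (x,y+1) \<or> n0 = (x,y-1)"
      using Pair adj_cases by simp
    then show ?thesis using True dvc n0(2)
      by (elim disjE) simp_all
  next
    case False
    then show ?thesis using dvc tiling_notR[OF T False] by simp
  qed
qed

lemma ivl_top: "a \<le> y \<Longrightarrow> {a..<y+1} = insert y {a..<(y::int)}"
  by auto

lemma pot_vert: "a \<le> y \<Longrightarrow> pot a f (x,y+1) = pot a f (x,y) + f (x-1,y) (x,y)"
  unfolding pot_def fst_conv snd_conv by (subst ivl_top) auto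

lemma antisD: "antis f \<Longrightarrow> f q p = - f p q"
  unfolding antis_def by blast

lemma pot_horiz:
  assumes an: "antis f" and ax: "a \<le> x" and ay: "a \<le> y" and cl: "\<And>j. a \<le> j \<Longrightarrow> j < y \<Longrightarrow> dv f (x,j) = 0"
  shows "pot a f (x+1,y) = pot a f (x,y) + f (x,y) (x,y-1)"
proof -
  have "\<forall>y'. a \<le> y' \<longrightarrow> y' \<le> y \<longrightarrow> pot a f (x+1,y') = pot a f (x,y') + f (x,y') (x,y'-1)"
  proof (intro allI impI)
    fix y' assume h1: "a \<le> y'" and h2: "y' \<le> y"
    show "pot a f (x+1,y') = pot a f (x,y') + f (x,y') (x,y'-1)"
      using h1 h2
    proof (induction y' rule: int_ge_induct)
      case base
      show ?case unfolding pot_def fst_conv snd_conv using ax by (subst ivl_top) auto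
    next
      case (step z)
      have IH: "pot a f (x+1,z) = pot a f (x,z) + f (x,z) (x,z-1)" using step.IH step.prems by simp
      have d: "dv f (x,z) = 0" using cl step.hyps step.prems by simp
      have d': "f (x,z) (x+1,z) + f (x,z) (x-1,z) + f (x,z) (x,z+1) + f (x,z) (x,z-1) = 0"
        using d unfolding dv_def by simp
      have a1: "f (x-1,z) (x,z) = - f (x,z) (x-1,z)" "f (x,z+1) (x,z) = - f (x,z) (x,z+1)"
        by (rule antisD[OF an])+
      have v1: "pot a f (x+1,z+1) = pot a f (x+1,z) + f (x,z) (x+1,z)"
        using pot_vert[OF step.hyps, of f "x+1"] by simp
      have v2: "pot a f (x,z+1) = pot a f (x,z) + f (x-1,z) (x,z)"
        using pot_vert[OF step.hyps, of f x] by simp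
      have e: "z + 1 - 1 = z" by simp
      show ?case unfolding e using v1 v2 IH d' a1 by linarith
    qed
  qed
  then show ?thesis using ay by simp
qed

lemma pot_add: "pot a (\<lambda>p q. f p q + g p q) v = pot a f v + pot a g v"
  by (simp add: pot_def sum.distrib)

lemma pot_diff: "pot a (\<lambda>p q. f p q - g p q) v = pot a f v - pot a g v"
  by (simp add: pot_def sum_subtractf)

lemma dv_add: "dv (\<lambda>p q. f p q + g p q) c = dv f c + dv g c"
  by (simp add: dv_def)

lemma dv_diff: "dv (\<lambda>p q. f p q - g p q) c = dv f c - dv g c"
  by (simp add: dv_def)

lemma dv_sum: "dv (\<lambda>p q. \<Sum>c\<in>S. k c * g c p q) x = (\<Sum>c\<in>S. k c * dv (g c) x)"
  by (simp add: dv_def sum.distrib algebra_simps sum_distrib_left)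

definition un :: "cell \<Rightarrow> cell \<Rightarrow> cell \<Rightarrow> cell \<Rightarrow> int" where
  "un c c' p q = (if p = c \<and> q = c' then 1 else if p = c' \<and> q = c then -1 else 0)"

lemma antis_un: "c \<noteq> c' \<Longrightarrow> antis (un c c')"
  by (auto simp: antis_def un_def)

lemma sum4:
  assumes "adjacent z n0"
  shows "(if (fst z+1,snd z) = n0 then 1 else 0) + (if (fst z-1,snd z) = n0 then 1 else 0)
       + (if (fst z,snd z+1) = n0 then 1 else 0) + (if (fst z,snd z-1) = n0 then 1 else (0::int)) = 1"
proof -
  obtain x y where c: "z = (x,y)" by (cases z)
  have "n0 = (x+1,y) \<or> n0 = (x-1,y) \<or> n0 = (x,y+1) \<or> n0 = (x,y-1)"
    using assms c adj_cases by simp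
  then show ?thesis using c by (elim disjE) simp_all
qed

lemma dv_un:
  assumes "adjacent c c'"
  shows "dv (un c c') z = (if z = c then 1 else 0) - (if z = c' then 1 else 0)"
proof -
  have ne: "c \<noteq> c'" using assms adj_irrefl by metis
  consider "z = c" | "z = c'" | "z \<noteq> c \<and> z \<noteq> c'" by blast
  then show ?thesis
  proof cases
    case 1
    have "dv (un c c') z = (if (fst z+1,snd z) = c' then 1 else 0) + (if (fst z-1,snd z) = c' then 1 else 0)
       + (if (fst z,snd z+1) = c' then 1 else 0) + (if (fst z,snd z-1) = c' then 1 else (0::int))"
      using 1 ne unfolding dv_def un_def by simp
    also have "\<dots> = 1" using sum4[of z c'] assms 1 by simp
    finally show ?thesis using 1 ne by simp
  next
    case 2
    have "dv (un c c') z = - ((if (fst z+1,snd z) = c then 1 else 0) + (if (fst z-1,snd z) = c then 1 else 0)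
       + (if (fst z,snd z+1) = c then 1 else 0) + (if (fst z,snd z-1) = c then 1 else (0::int)))"
      using 2 ne unfolding dv_def un_def by simp
    also have "\<dots> = -1" using sum4[of z c] adj_sym[OF assms] 2 by simp
    finally show ?thesis using 2 ne by simp
  next
    case 3
    then show ?thesis unfolding dv_def un_def by simp
  qed
qed

inductive esc :: "cell set \<Rightarrow> int \<Rightarrow> int \<Rightarrow> cell \<Rightarrow> bool" for R a b where
  out: "c \<notin> {a..<b} \<times> {a..<b} \<Longrightarrow> esc R a b c"
| step: "c \<notin> R \<Longrightarrow> adjacent c c' \<Longrightarrow> esc R a b c' \<Longrightarrow> esc R a b c"

definition vanish :: "cell set \<Rightarrow> (cell \<Rightarrow> cell \<Rightarrow> int) \<Rightarrow> bool" where
  "vanish R f \<longleftrightarrow> (\<forall>p q. p \<in> R \<or> q \<in> R \<longrightarrow> f p q = 0)"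

definition vo :: "cell set \<Rightarrow> (cell \<Rightarrow> cell \<Rightarrow> int) \<Rightarrow> bool" where
  "vo R f \<longleftrightarrow> (\<forall>p q. p \<notin> R \<or> q \<notin> R \<longrightarrow> f p q = 0)"

definition corners :: "cell \<Rightarrow> (int \<times> int) set" where
  "corners c = {c, (fst c+1, snd c), (fst c, snd c+1), (fst c+1, snd c+1)}"

locale grid =
  fixes R :: "cell set" and a b :: int
  assumes finR: "finite R" and Rbox: "R \<subseteq> {a..<b} \<times> {a..<b}" and ab: "a < b"
    and escR: "\<And>c. c \<in> {a..<b} \<times> {a..<b} \<Longrightarrow> c \<notin> R \<Longrightarrow> esc R a b c"
begin

abbreviation "Bx \<equiv> {a..<b} \<times> {a..<b}"
abbreviation "Vx \<equiv> {a..b} \<times> {a..b}"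

definition closedB :: "(cell \<Rightarrow> cell \<Rightarrow> int) \<Rightarrow> bool" where
  "closedB f \<longleftrightarrow> (\<forall>x\<in>Bx. dv f x = 0)"

lemma esc_notR: "esc R a b c \<Longrightarrow> c \<notin> R"
  by (induction rule: esc.induct) (use Rbox in auto)

lemma esc_flow: "esc R a b c \<Longrightarrow> \<exists>P. antis P \<and> vanish R P \<and> (\<forall>x\<in>Bx. dv P x = (if x = c then 1 else 0))"
proof (induction rule: esc.induct)
  case (out c)
  then show ?case by (rule_tac x="\<lambda>p q. 0" in exI) (auto simp: antis_def vanish_def dv_def)
next
  case (step c c')
  then obtain P where P: "antis P" "vanish R P" "\<forall>x\<in>Bx. dv P x = (if x = c' then 1 else 0)" by blast
  have ne: "c \<noteq> c'" using step.hyps(2) adj_irrefl by metis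
  have c'R: "c' \<notin> R" using esc_notR[OF step.hyps(3)] .
  let ?Q = "\<lambda>p q. P p q + un c c' p q"
  have "antis ?Q"
  proof (rule antisI)
    fix p q show "?Q q p = - ?Q p q"
      using antisD[OF P(1), of p q] antisD[OF antis_un[OF ne], of p q] by simp
  qed
  moreover have "vanish R ?Q" using P(2) step.hyps(1) c'R unfolding vanish_def un_def by auto
  moreover have "\<forall>x\<in>Bx. dv ?Q x = (if x = c then 1 else 0)"
    using P(3) dv_un[OF step.hyps(2)] by (simp add: dv_add)
  ultimately show ?case by blast
qed

lemma Ef_ex: "\<exists>E. antis E \<and> vanish R E \<and> (\<forall>x\<in>Bx. dv E x = (if x \<in> R then 0 else -4 * sc x))"
proof -
  have "\<forall>c\<in>Bx - R. \<exists>P. antis P \<and> vanish R P \<and> (\<forall>x\<in>Bx. dv P x = (if x = c then 1 else 0))"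
    using esc_flow escR by blast
  then obtain Pf where Pf: "\<And>c. c \<in> Bx - R \<Longrightarrow> antis (Pf c) \<and> vanish R (Pf c) \<and> (\<forall>x\<in>Bx. dv (Pf c) x = (if x = c then 1 else 0))"
    by metis
  define E where "E = (\<lambda>p q. \<Sum>c\<in>Bx - R. (-4 * sc c) * Pf c p q)"
  have "antis E"
  proof (rule antisI)
    fix p q
    have "E q p = (\<Sum>c\<in>Bx - R. - ((-4 * sc c) * Pf c p q))"
      unfolding E_def
    proof (rule sum.cong)
      fix c assume "c \<in> Bx - R"
      then have "Pf c q p = - Pf c p q" using Pf antisD by blast
      then show "-4 * sc c * Pf c q p = - (-4 * sc c * Pf c p q)" by simp
    qed simp
    then show "E q p = - E p q" unfolding E_def by (simp add: sum_negf)
  qed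
  moreover have "vanish R E" unfolding vanish_def E_def
    using Pf unfolding vanish_def by auto
  moreover have "\<forall>x\<in>Bx. dv E x = (if x \<in> R then 0 else -4 * sc x)"
  proof
    fix x assume x: "x \<in> Bx"
    have "dv E x = (\<Sum>c\<in>Bx - R. (-4 * sc c) * dv (Pf c) x)"
      unfolding E_def by (rule dv_sum)
    also have "\<dots> = (\<Sum>c\<in>Bx - R. (if x = c then -4 * sc c else 0))"
    proof (rule sum.cong)
      fix c assume "c \<in> Bx - R"
      then have "dv (Pf c) x = (if x = c then 1 else 0)" using Pf x by blast
      then show "(-4 * sc c) * dv (Pf c) x = (if x = c then -4 * sc c else 0)" by simp
    qed simp
    also have "\<dots> = (if x \<in> R then 0 else -4 * sc x)"
      using x by (simp add: sum.delta)
    finally show "dv E x = (if x \<in> R then 0 else -4 * sc x)" .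
  qed
  ultimately show ?thesis by blast
qed

definition Ef where "Ef = (SOME E. antis E \<and> vanish R E \<and> (\<forall>x\<in>Bx. dv E x = (if x \<in> R then 0 else -4 * sc x)))"

lemma Ef: "antis Ef" "vanish R Ef" "\<And>x. x \<in> Bx \<Longrightarrow> dv Ef x = (if x \<in> R then 0 else -4 * sc x)"
  using someI_ex[OF Ef_ex] unfolding Ef_def[symmetric] by auto

definition FT where "FT T = (\<lambda>p q. tf T p q + Ef p q)"

lemma antis_FT: "antis (FT T)"
proof (rule antisI)
  fix p q show "FT T q p = - FT T p q"
    unfolding FT_def using antisD[OF antis_tf, of T p q] antisD[OF Ef(1), of p q] by linarith
qed

lemma closed_FT: "T \<in> tilings R \<Longrightarrow> closedB (FT T)"
  unfolding closedB_def FT_def by (auto simp: dv_add dv_tf Ef(3))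

lemma FT_R: "p \<in> R \<Longrightarrow> FT T p q = tf T p q"
proof -
  assume "p \<in> R"
  then have "Ef p q = 0" using Ef(2) unfolding vanish_def by blast
  then show ?thesis unfolding FT_def by simp
qed

definition hT where "hT T = pot a (FT T)"
definition del where "del T T' = pot a (\<lambda>p q. tf T p q - tf T' p q)"

lemma hT_del: "hT T v - hT T' v = del T T' v"
proof -
  have "(\<lambda>p q. FT T p q - FT T' p q) = (\<lambda>p q. tf T p q - tf T' p q)"
    unfolding FT_def by auto
  then show ?thesis unfolding hT_def del_def pot_diff[symmetric] by simp
qed

lemma pot_h:
  assumes "antis f" "closedB f" "a \<le> x" "x < b" "a \<le> y" "y \<le> b"
  shows "pot a f (x+1,y) = pot a f (x,y) + f (x,y) (x,y-1)"
  by (rule pot_horiz) (use assms in \<open>auto simp: closedB_def\<close>)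

context
  fixes f assumes an: "antis f" and cl: "closedB f" and v0: "vo R f"
begin

lemma z_bot: "pot a f (x,a) = 0"
proof -
  have "\<forall>i. (i,a-1) \<notin> R" using Rbox by auto
  then show ?thesis using v0 unfolding pot_def vo_def by simp
qed

lemma z_left: "pot a f (a,y) = 0"
proof -
  have "\<forall>j. (a-1,j) \<notin> R" using Rbox by auto
  then show ?thesis using v0 unfolding pot_def vo_def by simp
qed

lemma z_right: "a \<le> y \<Longrightarrow> y \<le> b \<Longrightarrow> pot a f (b,y) = 0"
proof (induction y rule: int_ge_induct)
  case base then show ?case using z_bot by simp
next
  case (step y)
  have "(b,y) \<notin> R" using Rbox by auto
  then have "f (b-1,y) (b,y) = 0" using v0 unfolding vo_def by blast
  then show ?case using pot_vert[OF step.hyps, of f b] step by simp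
qed

lemma z_top: "a \<le> x \<Longrightarrow> x \<le> b \<Longrightarrow> pot a f (x,b) = 0"
proof (induction x rule: int_ge_induct)
  case base then show ?case using z_left by simp
next
  case (step x)
  have "(x,b) \<notin> R" using Rbox by auto
  then have "f (x,b) (x,b-1) = 0" using v0 unfolding vo_def by blast
  then show ?case using pot_h[OF an cl step.hyps, of b] step ab by simp
qed

lemma z_bdry: "v \<in> Vx \<Longrightarrow> fst v = a \<or> fst v = b \<or> snd v = a \<or> snd v = b \<Longrightarrow> pot a f v = 0"
  using z_bot z_left z_right z_top by (cases v) auto

lemma z_esc: "esc R a b c \<Longrightarrow> v \<in> corners c \<Longrightarrow> v \<in> Vx \<Longrightarrow> pot a f v = 0"
proof (induction arbitrary: v rule: esc.induct)
  case (out c)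
  obtain x y where c: "c = (x,y)" by (cases c)
  show ?case using out c by (intro z_bdry) (auto simp: corners_def)
next
  case (step c c')
  show ?case
  proof (cases "c \<in> Bx")
    case False
    obtain x y where c: "c = (x,y)" by (cases c)
    show ?thesis using False step.prems c by (intro z_bdry) (auto simp: corners_def)
  next
    case True
    obtain x y where c: "c = (x,y)" by (cases c)
    have xy: "a \<le> x" "x < b" "a \<le> y" "y < b" using True c by auto
    have z1: "f (x,y) (x,y-1) = 0" "f (x-1,y) (x,y) = 0" "f (x,y) (x+1,y) = 0"
      using v0 step.hyps(1) c unfolding vo_def by auto
    have h1: "pot a f (x+1,y) = pot a f (x,y)" using pot_h[OF an cl, of x y] xy z1 by simp
    have h2: "pot a f (x,y+1) = pot a f (x,y)" using pot_vert[of a y f x] xy z1 by simp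
    have h3: "pot a f (x+1,y+1) = pot a f (x+1,y)" using pot_vert[of a y f "x+1"] xy z1 by simp
    have "c' = (x+1,y) \<or> c' = (x-1,y) \<or> c' = (x,y+1) \<or> c' = (x,y-1)"
      using step.hyps(2) c adj_cases by simp
    then have "pot a f (x,y) = 0"
    proof (elim disjE)
      assume "c' = (x+1,y)" then show ?thesis using step.IH[of "(x+1,y)"] h1 xy by (auto simp: corners_def)
    next
      assume "c' = (x-1,y)" then show ?thesis using step.IH[of "(x,y)"] xy by (auto simp: corners_def)
    next
      assume "c' = (x,y+1)" then show ?thesis using step.IH[of "(x,y+1)"] h2 xy by (auto simp: corners_def)
    next
      assume "c' = (x,y-1)" then show ?thesis using step.IH[of "(x,y)"] xy by (auto simp: corners_def)
    qed
    then show ?thesis using step.prems h1 h2 h3 c by (auto simp: corners_def)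
  qed
qed

lemma z_nonint:
  assumes "(x,y) \<in> Vx" "\<not> ((x,y) \<in> R \<and> (x-1,y) \<in> R \<and> (x-1,y-1) \<in> R \<and> (x,y-1) \<in> R)"
  shows "pot a f (x,y) = 0"
proof -
  have E: "esc R a b k" if "k \<notin> R" for k
    using escR[of k] esc.out[of k] that by blast
  from assms(2) consider "(x,y) \<notin> R" | "(x-1,y) \<notin> R" | "(x-1,y-1) \<notin> R" | "(x,y-1) \<notin> R" by blast
  then show ?thesis
  proof cases
    case 1 then show ?thesis using z_esc[OF E[OF 1], of "(x,y)"] assms(1) by (auto simp: corners_def)
  next
    case 2 then show ?thesis using z_esc[OF E[OF 2], of "(x,y)"] assms(1) by (auto simp: corners_def)
  next
    case 3 then show ?thesis using z_esc[OF E[OF 3], of "(x,y)"] assms(1) by (auto simp: corners_def)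
  next
    case 4 then show ?thesis using z_esc[OF E[OF 4], of "(x,y)"] assms(1) by (auto simp: corners_def)
  qed
qed

end

end

definition flipstep :: "cell set \<Rightarrow> cell set set \<Rightarrow> cell set set \<Rightarrow> bool" where
  "flipstep R T T2 \<longleftrightarrow> (\<exists>D1 D2. (D1,D2) \<in> local_flips R \<and> D1 \<subseteq> T \<and> D2 \<inter> T = {} \<and> T2 = (T - D1) \<union> D2)"

lemma flip_tiling:
  assumes T: "T \<in> tilings R" and D1: "D1 \<subseteq> T" and D2: "D2 \<subseteq> dominoes R"
    and U: "\<Union>D1 = \<Union>D2" and uq: "\<And>c d d'. d \<in> D2 \<Longrightarrow> d' \<in> D2 \<Longrightarrow> c \<in> d \<Longrightarrow> c \<in> d' \<Longrightarrow> d = d'"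
  shows "(T - D1) \<union> D2 \<in> tilings R"
proof -
  have Td: "T \<subseteq> dominoes R" and Tu: "\<And>c. c \<in> R \<Longrightarrow> \<exists>!d. d \<in> T \<and> c \<in> d"
    using T unfolding tilings_def by auto
  have "\<exists>!d. d \<in> (T - D1) \<union> D2 \<and> c \<in> d" if c: "c \<in> R" for c
  proof -
    obtain d0 where d0: "d0 \<in> T" "c \<in> d0" and d0u: "\<And>e. e \<in> T \<Longrightarrow> c \<in> e \<Longrightarrow> e = d0"
      using Tu[OF c] by metis
    show ?thesis
    proof (cases "c \<in> \<Union>D2")
      case True
      then obtain d where d: "d \<in> D2" "c \<in> d" by blast
      obtain d1 where d1: "d1 \<in> D1" "c \<in> d1" using True U by blast
      have "d1 = d0" using d0u d1 D1 by blast
      show ?thesis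
      proof (rule ex1I[of _ d])
        show "d \<in> T - D1 \<union> D2 \<and> c \<in> d" using d by blast
      next
        fix e assume e: "e \<in> T - D1 \<union> D2 \<and> c \<in> e"
        show "e = d"
        proof (cases "e \<in> D2")
          case True then show ?thesis using uq d e by blast
        next
          case False
          then have "e \<in> T" "e \<notin> D1" using e by auto
          then show ?thesis using d0u e d1 \<open>d1 = d0\<close> by blast
        qed
      qed
    next
      case False
      have "d0 \<notin> D1" using False U d0(2) by blast
      show ?thesis
      proof (rule ex1I[of _ d0])
        show "d0 \<in> T - D1 \<union> D2 \<and> c \<in> d0" using d0 \<open>d0 \<notin> D1\<close> by blast
      next
        fix e assume e: "e \<in> T - D1 \<union> D2 \<and> c \<in> e"
        then have "e \<in> T" using False by blast
        then show "e = d0" using d0u e by blast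
      qed
    qed
  qed
  moreover have "(T - D1) \<union> D2 \<subseteq> dominoes R" using Td D2 by blast
  ultimately show ?thesis unfolding tilings_def by blast
qed

lemma toggle:
  assumes "adjacent p q" "tf T p q < 0" "{p,q} \<in> T2 \<longleftrightarrow> {p,q} \<notin> T"
  shows "tf T2 p q = tf T p q + 4"
  using assms sc_vals[of p] by (auto simp: tf_def split: if_splits)

lemma neg_mem:
  assumes "adjacent p q" "tf T p q < 0"
  shows "{p,q} \<in> T \<longleftrightarrow> sc p = 1"
  using assms sc_vals[of p] by (auto simp: tf_def split: if_splits)

lemma down_arith:
  fixes u uo sg dw dz hw hz :: int
  assumes "sg = 1 \<or> sg = -1" "u = sg \<or> u = -3 * sg" "uo = sg \<or> uo = -3 * sg"
    "dw = dz + u - uo" "dw \<le> dz" "dw = dz \<longrightarrow> hw \<le> hz" "hw = hz + u"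
  shows "u < 0"
  using assms by auto

context grid
begin

lemma pot_unique:
  assumes an: "antis f" and cl: "closedB f" and p0: "\<phi> (a,a) = 0"
    and ph: "\<And>x'. a \<le> x' \<Longrightarrow> x' < b \<Longrightarrow> \<phi> (x'+1,a) = \<phi> (x',a) + f (x',a) (x',a-1)"
    and pv: "\<And>x' y'. a \<le> x' \<Longrightarrow> x' \<le> b \<Longrightarrow> a \<le> y' \<Longrightarrow> y' < b \<Longrightarrow> \<phi> (x',y'+1) = \<phi> (x',y') + f (x'-1,y') (x',y')"
    and w: "w \<in> Vx"
  shows "\<phi> w = pot a f w"
proof -
  have bot: "\<phi> (x',a) = pot a f (x',a)" if "a \<le> x'" "x' \<le> b" for x'
    using that
  proof (induction x' rule: int_ge_induct)
    case base then show ?case using p0 by (simp add: pot_def)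
  next
    case (step x')
    then show ?case using ph[of x'] pot_h[OF an cl, of x' a] ab by simp
  qed
  have col: "\<phi> (x',y') = pot a f (x',y')" if "a \<le> x'" "x' \<le> b" "a \<le> y'" "y' \<le> b" for x' y'
    using that(3,4)
  proof (induction y' rule: int_ge_induct)
    case base then show ?case using bot that by simp
  next
    case (step y')
    then show ?case using pv[of x' y'] pot_vert[of a y' f x'] that by simp
  qed
  show ?thesis using w col by (cases w) auto
qed

lemma edges:
  assumes X: "X \<in> tilings R" and cells: "(x,y) \<in> R" "(x-1,y) \<in> R" "(x-1,y-1) \<in> R" "(x,y-1) \<in> R"
  shows "hT X (x+1,y) = hT X (x,y) + tf X (x,y) (x,y-1)"
    "hT X (x,y+1) = hT X (x,y) + tf X (x-1,y) (x,y)"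
    "hT X (x-1,y) = hT X (x,y) + tf X (x-1,y-1) (x-1,y)"
    "hT X (x,y-1) = hT X (x,y) + tf X (x,y-1) (x-1,y-1)"
proof -
  have xy: "a \<le> x-1" "x < b" "a \<le> y-1" "y < b" using cells Rbox by auto
  note an = antis_FT[of X] and cl = closed_FT[OF X]
  show "hT X (x+1,y) = hT X (x,y) + tf X (x,y) (x,y-1)"
    unfolding hT_def using pot_h[OF an cl, of x y] xy FT_R[OF cells(1)] by simp
  show "hT X (x,y+1) = hT X (x,y) + tf X (x-1,y) (x,y)"
    unfolding hT_def using pot_vert[of a y "FT X" x] xy FT_R[OF cells(2)] by simp
  have "pot a (FT X) (x-1+1,y) = pot a (FT X) (x-1,y) + FT X (x-1,y) (x-1,y-1)"
    using pot_h[OF an cl, of "x-1" y] xy by simp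
  moreover have "FT X (x-1,y) (x-1,y-1) = - tf X (x-1,y-1) (x-1,y)"
    using FT_R[OF cells(2)] antisD[OF antis_tf] by metis
  ultimately show "hT X (x-1,y) = hT X (x,y) + tf X (x-1,y-1) (x-1,y)"
    unfolding hT_def by simp
  have "pot a (FT X) (x,y-1+1) = pot a (FT X) (x,y-1) + FT X (x-1,y-1) (x,y-1)"
    using pot_vert[of a "y-1" "FT X" x] xy by simp
  moreover have "FT X (x-1,y-1) (x,y-1) = - tf X (x,y-1) (x-1,y-1)"
    using FT_R[OF cells(3)] antisD[OF antis_tf] by metis
  ultimately show "hT X (x,y-1) = hT X (x,y) + tf X (x,y-1) (x-1,y-1)"
    unfolding hT_def by simp
qed

end

lemma tf_cong: "({p,q} \<in> T2 \<longleftrightarrow> {p,q} \<in> T) \<Longrightarrow> tf T2 p q = tf T p q"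
  by (simp add: tf_def)

context grid
begin

lemma g_props:
  assumes T: "T \<in> tilings R" and T': "T' \<in> tilings R"
  shows "antis (\<lambda>p q. tf T p q - tf T' p q)" "closedB (\<lambda>p q. tf T p q - tf T' p q)"
    "vo R (\<lambda>p q. tf T p q - tf T' p q)"
proof -
  show "antis (\<lambda>p q. tf T p q - tf T' p q)"
  proof (rule antisI)
    fix p q show "tf T q p - tf T' q p = - (tf T p q - tf T' p q)"
      using antisD[OF antis_tf, of T q p] antisD[OF antis_tf, of T' q p] by simp
  qed
  show "closedB (\<lambda>p q. tf T p q - tf T' p q)"
    unfolding closedB_def by (simp add: dv_diff dv_tf[OF T] dv_tf[OF T'])
  show "vo R (\<lambda>p q. tf T p q - tf T' p q)"
    unfolding vo_def
  proof (intro allI impI)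
    fix p q assume "p \<notin> R \<or> q \<notin> R"
    then have "{p,q} \<notin> T" "{p,q} \<notin> T'" using tiling_notR[OF T] tiling_notR[OF T'] by blast+
    then show "tf T p q - tf T' p q = 0" by (simp add: tf_def)
  qed
qed

lemma flip_exists:
  assumes T: "T \<in> tilings R" and T': "T' \<in> tilings R" and v: "(x,y) \<in> Vx" and pos: "del T T' (x,y) > 0"
   and mx: "\<And>w. w \<in> Vx \<Longrightarrow> del T T' w \<le> del T T' (x,y)"
   and mh: "\<And>w. w \<in> Vx \<Longrightarrow> del T T' w = del T T' (x,y) \<Longrightarrow> hT T w \<le> hT T (x,y)"
  shows "\<exists>T2. T2 \<in> tilings R \<and> flipstep R T T2 \<and> (\<forall>w\<in>Vx. del T2 T' w = del T T' w - (if w = (x,y) then 4 else 0))"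
proof -
  have cells: "(x,y) \<in> R" "(x-1,y) \<in> R" "(x-1,y-1) \<in> R" "(x,y-1) \<in> R"
    using z_nonint[OF g_props[OF T T'] v] pos unfolding del_def by force+
  have xy: "a \<le> x-1" "x < b" "a \<le> y-1" "y < b" using cells Rbox by auto
  have adjs: "adjacent (x,y) (x,y-1)" "adjacent (x-1,y) (x,y)" "adjacent (x-1,y-1) (x-1,y)" "adjacent (x,y-1) (x-1,y-1)"
    by (simp_all add: adj_cases)
  note eT = edges[OF T cells] and eT' = edges[OF T' cells]
  have dl: "\<And>w. del T T' w = hT T w - hT T' w" using hT_del by simp
  have vin: "(x+1,y) \<in> Vx" "(x,y+1) \<in> Vx" "(x-1,y) \<in> Vx" "(x,y-1) \<in> Vx" using xy by auto
  have d1: "tf T (x,y) (x,y-1) < 0"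
    by (rule down_arith[where sg = "sc (x,y)" and uo = "tf T' (x,y) (x,y-1)" and dw = "del T T' (x+1,y)"
          and dz = "del T T' (x,y)" and hw = "hT T (x+1,y)" and hz = "hT T (x,y)"])
       (use sc_vals tf_vals[OF adjs(1)] dl eT(1) eT'(1) mx[OF vin(1)] mh[OF vin(1)] in auto)
  have d2: "tf T (x-1,y) (x,y) < 0"
    by (rule down_arith[where sg = "sc (x-1,y)" and uo = "tf T' (x-1,y) (x,y)" and dw = "del T T' (x,y+1)"
          and dz = "del T T' (x,y)" and hw = "hT T (x,y+1)" and hz = "hT T (x,y)"])
       (use sc_vals tf_vals[OF adjs(2)] dl eT(2) eT'(2) mx[OF vin(2)] mh[OF vin(2)] in auto)
  have d3: "tf T (x-1,y-1) (x-1,y) < 0"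
    by (rule down_arith[where sg = "sc (x-1,y-1)" and uo = "tf T' (x-1,y-1) (x-1,y)" and dw = "del T T' (x-1,y)"
          and dz = "del T T' (x,y)" and hw = "hT T (x-1,y)" and hz = "hT T (x,y)"])
       (use sc_vals tf_vals[OF adjs(3)] dl eT(3) eT'(3) mx[OF vin(3)] mh[OF vin(3)] in auto)
  have d4: "tf T (x,y-1) (x-1,y-1) < 0"
    by (rule down_arith[where sg = "sc (x,y-1)" and uo = "tf T' (x,y-1) (x-1,y-1)" and dw = "del T T' (x,y-1)"
          and dz = "del T T' (x,y)" and hw = "hT T (x,y-1)" and hz = "hT T (x,y)"])
       (use sc_vals tf_vals[OF adjs(4)] dl eT(4) eT'(4) mx[OF vin(4)] mh[OF vin(4)] in auto)
  have m1: "{(x,y-1),(x,y)} \<in> T \<longleftrightarrow> sc (x,y) = 1" using neg_mem[OF adjs(1) d1] insert_commute[of "(x,y)" "(x,y-1)" "{}"] by simp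
  have m2: "{(x-1,y),(x,y)} \<in> T \<longleftrightarrow> sc (x-1,y) = 1" using neg_mem[OF adjs(2) d2] .
  have m3: "{(x-1,y-1),(x-1,y)} \<in> T \<longleftrightarrow> sc (x-1,y-1) = 1" using neg_mem[OF adjs(3) d3] .
  have m4: "{(x-1,y-1),(x,y-1)} \<in> T \<longleftrightarrow> sc (x,y-1) = 1" using neg_mem[OF adjs(4) d4] insert_commute[of "(x,y-1)" "(x-1,y-1)" "{}"] by simp
  have s2: "sc (x-1,y) = - sc (x,y)" using sc_adj[OF adjs(2)] sc_vals[of "(x,y)"] by auto
  have s3: "sc (x-1,y-1) = sc (x,y)" using sc_adj[OF adjs(3)] s2 by auto
  have s4: "sc (x,y-1) = - sc (x,y)" using sc_adj[OF adjs(1)] by auto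
  define Dv where "Dv = {{(x-1,y-1),(x-1,y)}, {(x,y-1),(x,y)}}"
  define Dh where "Dh = {{(x-1,y-1),(x,y-1)}, {(x-1,y),(x,y)}}"
  define E4 where "E4 = {{(x,y),(x,y-1)}, {(x-1,y),(x,y)}, {(x-1,y-1),(x-1,y)}, {(x,y-1),(x-1,y-1)}}"
  have lf1: "(Dv,Dh) \<in> local_flips R" and lf2: "(Dh,Dv) \<in> local_flips R"
  proof -
    have blk: "{(x-1,y-1), (x-1+1,y-1), (x-1,y-1+1), (x-1+1,y-1+1)} \<subseteq> R" using cells by simp
    have "Dh = {{(x-1,y-1),(x-1+1,y-1)}, {(x-1,y-1+1),(x-1+1,y-1+1)}}" unfolding Dh_def by simp
    moreover have "Dv = {{(x-1,y-1),(x-1,y-1+1)}, {(x-1+1,y-1),(x-1+1,y-1+1)}}" unfolding Dv_def by simp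
    ultimately show "(Dv,Dh) \<in> local_flips R" "(Dh,Dv) \<in> local_flips R"
      unfolding local_flips_def using blk by blast+
  qed
  have U: "\<Union>Dv = \<Union>Dh" unfolding Dv_def Dh_def by auto
  have dom: "Dv \<subseteq> dominoes R" "Dh \<subseteq> dominoes R"
    unfolding Dv_def Dh_def dominoes_def using cells adjs adj_sym by blast+
  have uqv: "\<And>c d d'. d \<in> Dv \<Longrightarrow> d' \<in> Dv \<Longrightarrow> c \<in> d \<Longrightarrow> c \<in> d' \<Longrightarrow> d = d'"
    unfolding Dv_def by auto
  have uqh: "\<And>c d d'. d \<in> Dh \<Longrightarrow> d' \<in> Dh \<Longrightarrow> c \<in> d \<Longrightarrow> c \<in> d' \<Longrightarrow> d = d'"
    unfolding Dh_def by auto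
  have E4eq: "Dv \<union> Dh = E4" unfolding Dv_def Dh_def E4_def
    using insert_commute[of "(x,y)" "(x,y-1)" "{}"] insert_commute[of "(x,y-1)" "(x-1,y-1)" "{}"] by auto
  obtain D1 D2 where D: "(D1,D2) \<in> local_flips R" "D1 \<subseteq> T" "D2 \<inter> T = {}" "D1 \<union> D2 = E4"
      "\<Union>D1 = \<Union>D2" "D2 \<subseteq> dominoes R" "\<And>c d d'. d \<in> D2 \<Longrightarrow> d' \<in> D2 \<Longrightarrow> c \<in> d \<Longrightarrow> c \<in> d' \<Longrightarrow> d = d'"
  proof (cases "sc (x,y) = 1")
    case True
    have "Dv \<subseteq> T" "Dh \<inter> T = {}" unfolding Dv_def Dh_def using m1 m2 m3 m4 s2 s3 s4 True by auto
    then show ?thesis using that[of Dv Dh] lf1 U dom uqh E4eq by blast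
  next
    case False
    then have F: "sc (x,y) = -1" using sc_vals by metis
    have "Dh \<subseteq> T" "Dv \<inter> T = {}" unfolding Dv_def Dh_def using m1 m2 m3 m4 s2 s3 s4 F by auto
    then show ?thesis using that[of Dh Dv] lf2 U dom uqv E4eq by (metis Un_commute)
  qed
  define T2 where "T2 = (T - D1) \<union> D2"
  have T2t: "T2 \<in> tilings R" unfolding T2_def by (rule flip_tiling[OF T D(2) D(6) D(5) D(7)])
  have fs: "flipstep R T T2" unfolding flipstep_def T2_def using D(1-3) by blast
  have memT2: "\<And>e. e \<in> T2 \<longleftrightarrow> (e \<in> T \<longleftrightarrow> e \<notin> E4)"
    unfolding T2_def using D(2-4) by blast
  define P where "P = {((x,y),(x,y-1)), ((x-1,y),(x,y)), ((x-1,y-1),(x-1,y)), ((x,y-1),(x-1,y-1))}"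
  have PE: "\<And>p q. {p,q} \<in> E4 \<Longrightarrow> (p,q) \<in> P \<or> (q,p) \<in> P"
    unfolding E4_def P_def by (auto simp: doubleton_eq_iff)
  have EP: "\<And>p q. (p,q) \<in> P \<Longrightarrow> {p,q} \<in> E4"
    unfolding E4_def P_def by auto
  have Pdown: "\<And>p q. (p,q) \<in> P \<Longrightarrow> adjacent p q \<and> tf T p q < 0"
    unfolding P_def using adjs d1 d2 d3 d4 by auto
  have Pnorev: "\<And>p q. (p,q) \<in> P \<Longrightarrow> (q,p) \<notin> P"
    unfolding P_def by auto
  define d where "d = (\<lambda>p q. tf T2 p q - tf T p q)"
  have dchar: "d p q = 4 * ((if (p,q) \<in> P then 1 else 0) - (if (q,p) \<in> P then 1 else 0))" for p q
  proof -
    consider "(p,q) \<in> P" | "(q,p) \<in> P" | "(p,q) \<notin> P \<and> (q,p) \<notin> P" by blast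
    then show ?thesis
    proof cases
      case 1
      have "tf T2 p q = tf T p q + 4"
        using toggle[of p q T T2] Pdown[OF 1] memT2[of "{p,q}"] EP[OF 1] by blast
      then show ?thesis unfolding d_def using 1 Pnorev[OF 1] by simp
    next
      case 2
      have "tf T2 q p = tf T q p + 4"
        using toggle[of q p T T2] Pdown[OF 2] memT2[of "{q,p}"] EP[OF 2] by blast
      moreover have "tf T2 p q = - tf T2 q p" "tf T p q = - tf T q p"
        using antisD[OF antis_tf] by metis+
      ultimately show ?thesis unfolding d_def using 2 Pnorev[OF 2] by simp
    next
      case 3
      then have "{p,q} \<notin> E4" using PE by blast
      then have "tf T2 p q = tf T p q" using memT2[of "{p,q}"] by (intro tf_cong) blast
      then show ?thesis unfolding d_def using 3 by simp
    qed
  qed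
  have dg: "antis d" "closedB d" unfolding d_def using g_props[OF T2t T] by auto
  define \<phi> where "\<phi> = (\<lambda>w. if w = (x,y) then -4 else (0::int))"
  have potd: "\<phi> w = pot a d w" if w: "w \<in> Vx" for w
  proof (rule pot_unique[OF dg])
    show "\<phi> (a,a) = 0" unfolding \<phi>_def using xy by auto
    show "\<phi> (x'+1,a) = \<phi> (x',a) + d (x',a) (x',a-1)" if "a \<le> x'" "x' < b" for x'
      unfolding \<phi>_def dchar P_def using xy by auto
    show "\<phi> (x',y'+1) = \<phi> (x',y') + d (x'-1,y') (x',y')" if "a \<le> x'" "x' \<le> b" "a \<le> y'" "y' < b" for x' y'
      unfolding \<phi>_def dchar P_def using xy by auto
  qed (rule w)
  have "\<forall>w\<in>Vx. del T2 T' w = del T T' w - (if w = (x,y) then 4 else 0)"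
  proof
    fix w assume w: "w \<in> Vx"
    have eq: "(\<lambda>p q. tf T2 p q - tf T' p q) = (\<lambda>p q. d p q + (tf T p q - tf T' p q))"
      unfolding d_def by (simp add: fun_eq_iff)
    have "del T2 T' w = pot a (\<lambda>p q. d p q + (tf T p q - tf T' p q)) w"
      unfolding del_def eq ..
    also have "\<dots> = pot a d w + pot a (\<lambda>p q. tf T p q - tf T' p q) w" by (rule pot_add)
    also have "\<dots> = \<phi> w + del T T' w" using potd[OF w] unfolding del_def by simp
    finally show "del T2 T' w = del T T' w - (if w = (x,y) then 4 else 0)"
      unfolding \<phi>_def by simp
  qed
  then show ?thesis using T2t fs by blast
qed

end

definition fs :: "cell set \<Rightarrow> cell set set \<Rightarrow> cell set set \<Rightarrow> bool" where
  "fs R A B \<longleftrightarrow> A \<in> tilings R \<and> B \<in> tilings R \<and> (flipstep R A B \<or> flipstep R B A)"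

lemma fs_sym: "fs R A B \<Longrightarrow> fs R B A" unfolding fs_def by blast

lemma fs_rtr_sym: "(fs R)\<^sup>*\<^sup>* A B \<Longrightarrow> (fs R)\<^sup>*\<^sup>* B A"
proof (induction rule: rtranclp_induct)
  case base then show ?case by simp
next
  case (step y z)
  have "fs R z y" using fs_sym[OF step(2)] .
  then show ?case using step(3) by (rule converse_rtranclp_into_rtranclp)
qed

lemma ex_max: "finite S \<Longrightarrow> S \<noteq> {} \<Longrightarrow> \<exists>x\<in>S. \<forall>y\<in>S. (f y::int) \<le> f x"
proof -
  assume S: "finite S" "S \<noteq> {}"
  have "Max (f ` S) \<in> f ` S" using S by simp
  then obtain x where x: "x \<in> S" "f x = Max (f ` S)" by auto
  have "\<forall>y\<in>S. f y \<le> f x" using x S by simp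
  then show ?thesis using x by blast
qed

lemma sum_dec:
  assumes "finite V" "v \<in> V" "(f v::int) \<ge> 4"
  shows "(\<Sum>w\<in>V. nat \<bar>f w - (if w = v then 4 else 0)\<bar>) < (\<Sum>w\<in>V. nat \<bar>f w\<bar>)"
proof -
  let ?h = "\<lambda>w. nat \<bar>f w - (if w = v then 4 else 0)\<bar>"
  have 1: "sum ?h V = ?h v + sum ?h (V - {v})" by (rule sum.remove[OF assms(1,2)])
  have 2: "sum ?h (V - {v}) = (\<Sum>w\<in>V-{v}. nat \<bar>f w\<bar>)" by (rule sum.cong) auto
  have 3: "(\<Sum>w\<in>V. nat \<bar>f w\<bar>) = nat \<bar>f v\<bar> + (\<Sum>w\<in>V-{v}. nat \<bar>f w\<bar>)"
    by (rule sum.remove[OF assms(1,2)])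
  show ?thesis using 1 2 3 assms(3) by simp
qed

lemma tf_diff_dvd: "(4::int) dvd (tf T p q - tf T' p q)"
proof -
  have "tf T p q - tf T' p q = 4 * (if adjacent p q then sc p * ((if {p,q} \<in> T' then 1 else 0) - (if {p,q} \<in> T then 1 else 0)) else 0)"
    by (auto simp: tf_def algebra_simps)
  then show ?thesis by (metis dvd_triv_left)
qed

context grid
begin

definition mu where "mu T T' = (\<Sum>w\<in>Vx. nat \<bar>del T T' w\<bar>)"

lemma del_swap: "del T' T w = - del T T' w"
  unfolding del_def pot_diff by simp

lemma mu_swap: "mu T' T = mu T T'"
  unfolding mu_def del_swap[of T' T] by simp

lemma del_dvd: "4 dvd del T T' w"
  unfolding del_def pot_def by (intro dvd_add dvd_sum tf_diff_dvd)

lemma g_zero_pair: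
  assumes T: "T \<in> tilings R" and T': "T' \<in> tilings R" and z: "\<forall>w\<in>Vx. del T T' w = 0"
    and p: "p \<in> R" and q: "q \<in> R" and pq: "adjacent p q"
  shows "tf T p q = tf T' p q"
proof -
  note gp = g_props[OF T T']
  let ?g = "\<lambda>p q. tf T p q - tf T' p q"
  have an: "?g q p = - ?g p q" for p q using antisD[OF gp(1)] by simp
  obtain x y where pxy: "p = (x,y)" by (cases p)
  have xy: "a \<le> x" "x < b" "a \<le> y" "y < b" using p pxy Rbox by auto
  have H: "?g (x',y') (x',y'-1) = 0" if "a \<le> x'" "x' < b" "a \<le> y'" "y' \<le> b" for x' y'
  proof -
    have "pot a ?g (x'+1,y') = pot a ?g (x',y') + ?g (x',y') (x',y'-1)"
      by (rule pot_h[OF gp(1) gp(2)]) (use that in auto)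
    moreover have "pot a ?g (x'+1,y') = 0" "pot a ?g (x',y') = 0"
      using z that unfolding del_def by auto
    ultimately show ?thesis by simp
  qed
  have V: "?g (x'-1,y') (x',y') = 0" if "a \<le> x'" "x' \<le> b" "a \<le> y'" "y' < b" for x' y'
  proof -
    have "pot a ?g (x',y'+1) = pot a ?g (x',y') + ?g (x'-1,y') (x',y')"
      by (rule pot_vert) (use that in auto)
    moreover have "pot a ?g (x',y'+1) = 0" "pot a ?g (x',y') = 0"
      using z that unfolding del_def by auto
    ultimately show ?thesis by simp
  qed
  have "q = (x+1,y) \<or> q = (x-1,y) \<or> q = (x,y+1) \<or> q = (x,y-1)" using pq pxy adj_cases by simp
  then have "?g p q = 0"
  proof (elim disjE)
    assume qq: "q = (x+1,y)"
    have "x + 1 < b" using q qq Rbox by auto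
    then show ?thesis using V[of "x+1" y] xy qq pxy by simp
  next
    assume qq: "q = (x-1,y)"
    have "?g q p = 0" using V[of x y] xy qq pxy by simp
    then show ?thesis using an[of p q] by simp
  next
    assume qq: "q = (x,y+1)"
    have "y + 1 < b" using q qq Rbox by auto
    then have "?g q p = 0" using H[of x "y+1"] xy qq pxy by simp
    then show ?thesis using an[of p q] by simp
  next
    assume qq: "q = (x,y-1)"
    then show ?thesis using H[of x y] xy qq pxy by simp
  qed
  then show ?thesis by simp
qed

lemma del_zero_eq:
  assumes T: "T \<in> tilings R" and T': "T' \<in> tilings R" and z: "\<forall>w\<in>Vx. del T T' w = 0"
  shows "T = T'"
proof -
  have mem: "{p,q} \<in> T \<longleftrightarrow> {p,q} \<in> T'" if "p \<in> R" "q \<in> R" "adjacent p q" for p q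
  proof -
    have "tf T p q = tf T' p q" by (rule g_zero_pair[OF T T' z that])
    then show ?thesis using that(3) sc_vals[of p] by (auto simp: tf_def split: if_splits)
  qed
  have TD: "T \<subseteq> dominoes R" "T' \<subseteq> dominoes R" using T T' unfolding tilings_def by auto
  show ?thesis
  proof
    show "T \<subseteq> T'"
    proof
      fix d assume "d \<in> T"
      then obtain p q where "d = {p,q}" "p \<in> R" "q \<in> R" "adjacent p q" using TD unfolding dominoes_def by blast
      then show "d \<in> T'" using mem \<open>d \<in> T\<close> by blast
    qed
    show "T' \<subseteq> T"
    proof
      fix d assume "d \<in> T'"
      then obtain p q where "d = {p,q}" "p \<in> R" "q \<in> R" "adjacent p q" using TD unfolding dominoes_def by blast
      then show "d \<in> T" using mem \<open>d \<in> T'\<close> by blast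
    qed
  qed
qed

lemma step_down:
  assumes T: "T \<in> tilings R" and T': "T' \<in> tilings R" and ex: "\<exists>w\<in>Vx. del T T' w > 0"
  shows "\<exists>T2. T2 \<in> tilings R \<and> flipstep R T T2 \<and> mu T2 T' < mu T T'"
proof -
  have fin: "finite Vx" by simp
  have ne: "Vx \<noteq> {}" using ab by auto
  obtain v0 where v0: "v0 \<in> Vx" "\<forall>w\<in>Vx. del T T' w \<le> del T T' v0"
    using ex_max[OF fin ne, of "del T T'"] by blast
  have pos: "del T T' v0 > 0" using ex v0 by force
  define U where "U = {w\<in>Vx. del T T' w = del T T' v0}"
  have finU: "finite U" unfolding U_def by simp
  have neU: "U \<noteq> {}" using v0 unfolding U_def by blast
  obtain v where v: "v \<in> U" "\<forall>w\<in>U. hT T w \<le> hT T v"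
    using ex_max[OF finU neU, of "hT T"] by blast
  obtain x y where vxy: "v = (x,y)" by (cases v)
  have vV: "(x,y) \<in> Vx" and dv: "del T T' (x,y) = del T T' v0" using v vxy unfolding U_def by auto
  obtain T2 where T2: "T2 \<in> tilings R" "flipstep R T T2"
    "\<forall>w\<in>Vx. del T2 T' w = del T T' w - (if w = (x,y) then 4 else 0)"
  proof -
    have "\<exists>T2. T2 \<in> tilings R \<and> flipstep R T T2 \<and> (\<forall>w\<in>Vx. del T2 T' w = del T T' w - (if w = (x,y) then 4 else 0))"
    proof (rule flip_exists[OF T T' vV])
      show "del T T' (x,y) > 0" using pos dv by simp
      show "\<And>w. w \<in> Vx \<Longrightarrow> del T T' w \<le> del T T' (x,y)" using v0(2) dv by metis
      show "\<And>w. w \<in> Vx \<Longrightarrow> del T T' w = del T T' (x,y) \<Longrightarrow> hT T w \<le> hT T (x,y)"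
        using v vxy dv unfolding U_def by auto
    qed
    then show ?thesis using that by blast
  qed
  have ge4: "del T T' (x,y) \<ge> 4"
  proof -
    obtain k where "del T T' (x,y) = 4 * k" using del_dvd by (metis dvd_def)
    then show ?thesis using pos dv by simp
  qed
  have "mu T2 T' = (\<Sum>w\<in>Vx. nat \<bar>del T T' w - (if w = (x,y) then 4 else 0)\<bar>)"
    unfolding mu_def
  proof (rule sum.cong)
    fix w assume w: "w \<in> Vx"
    show "nat \<bar>del T2 T' w\<bar> = nat \<bar>del T T' w - (if w = (x,y) then 4 else 0)\<bar>"
      using T2(3)[rule_format, OF w] by (simp only:)
  qed simp
  also have "\<dots> < mu T T'" unfolding mu_def by (rule sum_dec[of Vx "(x,y)" "del T T'", OF fin vV ge4])
  finally show ?thesis using T2 by blast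
qed

lemma conn: "T \<in> tilings R \<Longrightarrow> T' \<in> tilings R \<Longrightarrow> (fs R)\<^sup>*\<^sup>* T T'"
proof (induction "mu T T'" arbitrary: T T' rule: less_induct)
  case less
  note T = less.prems(1) and T' = less.prems(2)
  have "(\<forall>w\<in>Vx. del T T' w = 0) \<or> (\<exists>w\<in>Vx. del T T' w > 0) \<or> (\<exists>w\<in>Vx. del T T' w < 0)"
  proof (cases "\<forall>w\<in>Vx. del T T' w = 0")
    case False
    then obtain w where "w \<in> Vx" "del T T' w \<noteq> 0" by blast
    then have "del T T' w > 0 \<or> del T T' w < 0" by linarith
    then show ?thesis using \<open>w \<in> Vx\<close> by blast
  qed simp
  then consider (z) "\<forall>w\<in>Vx. del T T' w = 0" | (p) "\<exists>w\<in>Vx. del T T' w > 0" | (n) "\<exists>w\<in>Vx. del T T' w < 0"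
    by blast
  then show ?case
  proof cases
    case z
    then show ?thesis using del_zero_eq[OF T T'] by simp
  next
    case p
    obtain T2 where T2: "T2 \<in> tilings R" "flipstep R T T2" "mu T2 T' < mu T T'"
      using step_down[OF T T' p] by blast
    have r: "(fs R)\<^sup>*\<^sup>* T2 T'" using less.hyps[OF T2(3) T2(1) T'] .
    have f: "fs R T T2" unfolding fs_def using T T2(1) T2(2) by simp
    show ?thesis using converse_rtranclp_into_rtranclp[of "fs R", OF f r] .
  next
    case n
    then obtain w where w: "w \<in> Vx" "del T T' w < 0" by blast
    have "del T' T w = - del T T' w" by (rule del_swap)
    then have n': "\<exists>w\<in>Vx. del T' T w > 0" using w by force
    obtain T2 where T2: "T2 \<in> tilings R" "flipstep R T' T2" "mu T2 T < mu T' T"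
      using step_down[OF T' T n'] by blast
    have "mu T2 T < mu T T'" using T2(3) mu_swap by simp
    then have "(fs R)\<^sup>*\<^sup>* T2 T" using less.hyps[OF _ T2(1) T] by blast
    moreover have "fs R T' T2" unfolding fs_def using T' T2(1) T2(2) by simp
    ultimately have "(fs R)\<^sup>*\<^sup>* T' T" using converse_rtranclp_into_rtranclp[of "fs R"] by blast
    then show ?thesis by (rule fs_rtr_sym)
  qed
qed

end

lemma gen_ideal_0: "0 \<in> gen_ideal G"
  unfolding gen_ideal_def by (rule CollectI, rule exI[of _ 0]) simp

lemma gen_ideal_gen: "g \<in> G \<Longrightarrow> g \<in> gen_ideal G"
  unfolding gen_ideal_def
  by (rule CollectI, rule exI[of _ 1], rule exI[of _ "\<lambda>_. 1"], rule exI[of _ "\<lambda>_. g"]) simp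

lemma gen_ideal_add:
  assumes "p \<in> gen_ideal G" "q \<in> gen_ideal G"
  shows "p + q \<in> gen_ideal G"
proof -
  obtain n :: nat and c g where p: "\<forall>i<n. g i \<in> G" "p = (\<Sum>i<n. c i * g i)"
    using assms(1) unfolding gen_ideal_def by auto
  obtain m :: nat and c' g' where q: "\<forall>i<m. g' i \<in> G" "q = (\<Sum>i<m. c' i * g' i)"
    using assms(2) unfolding gen_ideal_def by auto
  define C where "C = (\<lambda>i. if i < n then c i else c' (i - n))"
  define Gg where "Gg = (\<lambda>i. if i < n then g i else g' (i - n))"
  have sum: "(\<Sum>i<n+k. C i * Gg i) = (\<Sum>i<n. c i * g i) + (\<Sum>i<k. c' i * g' i)" for k
  proof (induction k)
    case 0
    show ?case by (simp add: C_def Gg_def)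
  next
    case (Suc k)
    have "(\<Sum>i<n + Suc k. C i * Gg i) = (\<Sum>i<n+k. C i * Gg i) + C (n+k) * Gg (n+k)" by simp
    then show ?case using Suc by (simp add: C_def Gg_def)
  qed
  have "\<forall>i<n+m. Gg i \<in> G" using p(1) q(1) unfolding Gg_def by auto
  moreover have "p + q = (\<Sum>i<n+m. C i * Gg i)" using sum[of m] p(2) q(2) by simp
  ultimately show ?thesis unfolding gen_ideal_def mem_Collect_eq
    by (intro exI[of _ "n+m"] exI[of _ C] exI[of _ Gg]) auto
qed

lemma gen_ideal_mult:
  assumes "p \<in> gen_ideal G"
  shows "r * p \<in> gen_ideal G"
proof -
  obtain n :: nat and c g where p: "\<forall>i<n. g i \<in> G" "p = (\<Sum>i<n. c i * g i)"
    using assms(1) unfolding gen_ideal_def by auto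
  have "r * p = (\<Sum>i<n. (r * c i) * g i)" using p(2) by (simp add: sum_distrib_left mult.assoc)
  then show ?thesis using p(1) unfolding gen_ideal_def mem_Collect_eq
    by (intro exI[of _ n] exI[of _ "\<lambda>i. r * c i"] exI[of _ g]) auto
qed

lemma gen_ideal_neg: "p \<in> gen_ideal G \<Longrightarrow> - p \<in> gen_ideal G"
  using gen_ideal_mult[of p G "-1"] by simp

lemma gen_ideal_sub:
  assumes "G \<subseteq> gen_ideal H"
  shows "gen_ideal G \<subseteq> gen_ideal H"
proof
  fix p assume "p \<in> gen_ideal G"
  then obtain n :: nat and c g where p: "\<forall>i<n. g i \<in> G" "p = (\<Sum>i<n. c i * g i)"
    unfolding gen_ideal_def by auto
  have "(\<Sum>i<k. c i * g i) \<in> gen_ideal H" if "k \<le> n" for k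
    using that
  proof (induction k)
    case 0 then show ?case by (simp add: gen_ideal_0)
  next
    case (Suc k)
    have "g k \<in> gen_ideal H" using p(1) Suc.prems assms by auto
    then have "c k * g k \<in> gen_ideal H" by (rule gen_ideal_mult)
    then show ?case using Suc by (simp add: gen_ideal_add)
  qed
  then show "p \<in> gen_ideal H" using p(2) by simp
qed

lemma ymono_union:
  assumes "finite A" "finite B" "A \<inter> B = {}"
  shows "(ymono (A \<union> B) :: 'k::comm_ring_1 ypoly) = ymono A * ymono B"
  unfolding ymono_def by (simp add: sum.union_disjoint[OF assms] mult_single)

lemma finite_dominoes: "finite R \<Longrightarrow> finite (dominoes R)"
proof -
  assume "finite R"
  moreover have "dominoes R \<subseteq> Pow R" unfolding dominoes_def by auto
  ultimately show ?thesis by (meson finite_Pow_iff finite_subset)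
qed

lemma flipstep_ideal:
  assumes finR: "finite R" and T: "T \<in> tilings R" and fl: "flipstep R T T2"
  shows "(ymono T - ymono T2 :: 'k::comm_ring_1 ypoly) \<in> flip_ideal R"
proof -
  obtain D1 D2 where D: "(D1,D2) \<in> local_flips R" "D1 \<subseteq> T" "D2 \<inter> T = {}" "T2 = (T - D1) \<union> D2"
    using fl unfolding flipstep_def by blast
  have finT: "finite T" using T finite_dominoes[OF finR] unfolding tilings_def by (auto intro: finite_subset)
  have finD: "finite D1" "finite D2" using D(1) unfolding local_flips_def by auto
  have e1: "T = (T - D1) \<union> D1" using D(2) by blast
  have "(ymono T :: 'k ypoly) = ymono (T - D1) * ymono D1"
    by (subst e1, rule ymono_union) (use finT finD in auto)
  moreover have "(ymono T2 :: 'k ypoly) = ymono (T - D1) * ymono D2"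
    unfolding D(4) by (rule ymono_union) (use finT finD D(3) in auto)
  ultimately have "(ymono T - ymono T2 :: 'k ypoly) = ymono (T - D1) * (ymono D1 - ymono D2)"
    by (simp add: right_diff_distrib)
  moreover have "(ymono D1 - ymono D2 :: 'k ypoly) \<in> flip_ideal R"
    unfolding flip_ideal_def using D(1) by (intro gen_ideal_gen) blast
  ultimately show ?thesis unfolding flip_ideal_def by (simp add: gen_ideal_mult)
qed

lemma rtr_ideal:
  assumes finR: "finite R" and r: "(fs R)\<^sup>*\<^sup>* A B"
  shows "(ymono A - ymono B :: 'k::comm_ring_1 ypoly) \<in> flip_ideal R"
  using r
proof (induction rule: rtranclp_induct)
  case base then show ?case unfolding flip_ideal_def by (simp add: gen_ideal_0)
next
  case (step y z)
  have "(ymono y - ymono z :: 'k ypoly) \<in> flip_ideal R"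
  proof -
    have yz: "y \<in> tilings R" "z \<in> tilings R" "flipstep R y z \<or> flipstep R z y"
      using step(2) unfolding fs_def by auto
    show ?thesis
    proof (cases "flipstep R y z")
      case True then show ?thesis using flipstep_ideal[OF finR yz(1)] by blast
    next
      case False
      then have "(ymono z - ymono y :: 'k ypoly) \<in> flip_ideal R"
        using flipstep_ideal[OF finR yz(2)] yz(3) by blast
      then have "- (ymono z - ymono y :: 'k ypoly) \<in> flip_ideal R"
        unfolding flip_ideal_def by (rule gen_ideal_neg)
      then show ?thesis by simp
    qed
  qed
  then have "(ymono A - ymono y) + (ymono y - ymono z :: 'k ypoly) \<in> flip_ideal R"
    using step(3) unfolding flip_ideal_def by (rule gen_ideal_add[rotated])
  then show ?case by simp
qed

lemma mem_us: "p \<in> unit_square c \<longleftrightarrow> real_of_int (fst c) \<le> fst p \<and> fst p \<le> real_of_int (fst c) + 1 \<and> real_of_int (snd c) \<le> snd p \<and> snd p \<le> real_of_int (snd c) + 1"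
  by (cases p) (auto simp: unit_square_def cbox_Pair_eq)

lemma S_compact: "finite R \<Longrightarrow> compact (region_space R)"
  unfolding region_space_def unit_square_def by (intro compact_UN) auto

lemma S_ANR: "finite R \<Longrightarrow> ANR (region_space R)"
  unfolding region_space_def by (rule ANR_finite_Union_convex_closed) (auto simp: unit_square_def)

lemma my_Borsukian_componentwise:
  fixes S :: "'a::euclidean_space set"
  assumes S: "compact S" and C: "\<And>C. C \<in> components S \<Longrightarrow> Borsukian C"
  shows "Borsukian S"
proof -
  have *: "ANR(-{0::complex})"
    by (simp add: ANR_delete open_Compl open_imp_ANR)
  show ?thesis
    using cohomotopically_trivial_on_components [OF _ *, of S] S C by (auto simp: Borsukian_alt)
qed

lemma loops_component:
  assumes hl: "homotopic_loops S p q" and C: "C \<in> components S" and pC: "pathstart p \<in> C"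
  shows "homotopic_loops C p q"
proof -
  obtain h where h: "continuous_on ({0..1::real} \<times> {0..1}) h" "h \<in> ({0..1} \<times> {0..1}) \<rightarrow> S"
    "\<forall>x\<in>{0..1}. h(0,x) = p x" "\<forall>x\<in>{0..1}. h(1,x) = q x"
    "\<forall>t\<in>{0..1}. pathfinish(h \<circ> Pair t) = pathstart(h \<circ> Pair t)"
    using hl unfolding homotopic_loops by blast
  let ?K = "h ` ({0..1} \<times> {0..1})"
  have "connected ({0..1::real} \<times> {0..1::real})"
    by (intro convex_connected convex_Times) auto
  then have cK: "connected ?K" by (rule connected_continuous_image[OF h(1)])
  have KS: "?K \<subseteq> S" using h(2) by auto
  have "h (0,0) = pathstart p" using h(3) unfolding pathstart_def by simp
  moreover have "h (0,0) \<in> ?K" by (rule imageI) auto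
  ultimately have "h (0,0) \<in> C \<inter> ?K" using pC by auto
  then have "C \<inter> ?K \<noteq> {}" by blast
  then have KC: "?K \<subseteq> C" using components_maximal[OF C cK KS] by blast
  have "h \<in> ({0..1} \<times> {0..1}) \<rightarrow> C" using KC by auto
  then show ?thesis unfolding homotopic_loops using h by blast
qed

lemma conn_compl:
  assumes finR: "finite R" and nh: "no_holes (region_space R)"
  shows "connected (- region_space R)"
proof -
  define S where "S = region_space R"
  have cS: "compact S" unfolding S_def by (rule S_compact[OF finR])
  have lS: "locally path_connected S" unfolding S_def by (rule ANR_imp_locally_path_connected[OF S_ANR[OF finR]])
  have BC: "Borsukian C" if C: "C \<in> components S" for C
  proof -
    have lC: "locally path_connected C" by (rule locally_path_connected_components[OF lS C])
    obtain x where x: "x \<in> S" "C = connected_component_set S x" using C unfolding components_iff by blast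
    have pC: "path_connected C"
      using x path_component_eq_connected_component_set[OF lS, of x] path_connected_path_component by metis
    have CS: "C \<subseteq> S" using C in_components_subset by blast
    have "simply_connected C"
      unfolding simply_connected_eq_contractible_loop_some
    proof (intro conjI pC allI impI)
      fix p assume p: "path p \<and> path_image p \<subseteq> C \<and> pathfinish p = pathstart p"
      have "homotopic_loops S p (linepath (pathstart p) (pathstart p))"
        using nh p CS unfolding no_holes_def S_def by blast
      moreover have ps: "pathstart p \<in> C" using p pathstart_in_path_image by blast
      ultimately have "homotopic_loops C p (linepath (pathstart p) (pathstart p))"
        using loops_component C by blast
      then show "\<exists>a. a \<in> C \<and> homotopic_loops C p (linepath a a)" using ps by blast
    qed
    then show ?thesis using lC simply_connected_imp_Borsukian by blast
  qed
  have BS: "Borsukian S" by (rule my_Borsukian_componentwise) (use cS BC in auto)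
  define f where "f = (\<lambda>z::real \<times> real. Complex (fst z) (snd z))"
  have lin: "linear f" unfolding f_def by (rule linearI) (auto simp: complex_eq_iff)
  have inj: "inj f" unfolding f_def inj_def by (auto simp: prod_eq_iff)
  have "Borsukian (f ` S)" using Borsukian_injective_linear_image[OF lin inj] BS by blast
  moreover have "compact (f ` S)"
    by (rule compact_continuous_image[OF _ cS]) (rule linear_continuous_on, use lin linear_conv_bounded_linear in blast)
  ultimately have "connected (- (f ` S))" using Borsukian_separation_compact by blast
  moreover have "continuous_on (- (f ` S)) (\<lambda>z. (Re z, Im z))" by (intro continuous_intros)
  ultimately have "connected ((\<lambda>z. (Re z, Im z)) ` (- (f ` S)))" by (rule connected_continuous_image[rotated])
  moreover have "(\<lambda>z. (Re z, Im z)) ` (- (f ` S)) = - S"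
  proof
    show "(\<lambda>z. (Re z, Im z)) ` (- (f ` S)) \<subseteq> - S"
    proof
      fix u assume "u \<in> (\<lambda>z. (Re z, Im z)) ` (- (f ` S))"
      then obtain z where z: "z \<notin> f ` S" "u = (Re z, Im z)" by auto
      have "f u = z" unfolding f_def z(2) by (simp add: complex_eq_iff)
      then show "u \<in> - S" using z(1) by auto
    qed
    show "- S \<subseteq> (\<lambda>z. (Re z, Im z)) ` (- (f ` S))"
    proof
      fix u assume u: "u \<in> - S"
      have "f u \<notin> f ` S" using u inj_image_mem_iff[OF inj] by blast
      moreover have "u = (Re (f u), Im (f u))" unfolding f_def by simp
      ultimately show "u \<in> (\<lambda>z. (Re z, Im z)) ` (- (f ` S))" by blast
    qed
  qed
  ultimately show ?thesis unfolding S_def by simp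
qed

definition st :: "cell set \<Rightarrow> cell \<Rightarrow> cell \<Rightarrow> bool" where "st R p q \<longleftrightarrow> q \<notin> R \<and> adjacent p q"

lemma st_esc:
  assumes "(st R)\<^sup>*\<^sup>* c k" "esc R a b k" "c \<notin> R"
  shows "esc R a b c"
proof -
  have "c \<notin> R \<longrightarrow> esc R a b c" using assms(1)
  proof (induction rule: converse_rtranclp_induct)
    case base then show ?case using assms(2) by blast
  next
    case (step y z)
    then have "esc R a b z" "adjacent y z" unfolding st_def by auto
    then show ?case using esc.step by blast
  qed
  then show ?thesis using assms(3) by blast
qed

lemma st_notR: "(st R)\<^sup>*\<^sup>* c k \<Longrightarrow> c \<notin> R \<Longrightarrow> k \<notin> R"
  by (induction rule: rtranclp_induct) (auto simp: st_def)

lemma real_int_lt: "(of_int m :: real) < of_int n + 1 \<Longrightarrow> m \<le> n"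
proof -
  assume "(of_int m :: real) < of_int n + 1"
  then have "(of_int m :: real) < of_int (n + 1)" by simp
  then have "m < n + 1" by (simp only: of_int_less_iff)
  then show "m \<le> n" by simp
qed

lemma near_floor:
  fixes r :: real
  shows "\<exists>e>0. \<forall>t. \<bar>t - r\<bar> < e \<longrightarrow> of_int \<lfloor>t\<rfloor> \<le> r \<and> r \<le> of_int \<lfloor>t\<rfloor> + 1"
proof (cases "r = of_int \<lfloor>r\<rfloor>")
  case True
  show ?thesis
  proof (intro exI[of _ 1] conjI allI impI)
    fix t :: real assume t: "\<bar>t - r\<bar> < 1"
    have tt: "r - 1 < t" "t < r + 1" using t by (auto simp: abs_less_iff)
    have f1: "of_int \<lfloor>t\<rfloor> \<le> t" by simp
    have f2: "t < of_int \<lfloor>t\<rfloor> + 1" by linarith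
    have "(of_int \<lfloor>t\<rfloor> :: real) < of_int \<lfloor>r\<rfloor> + 1" using f1 tt True by linarith
    then have "\<lfloor>t\<rfloor> \<le> \<lfloor>r\<rfloor>" by (rule real_int_lt)
    then show "of_int \<lfloor>t\<rfloor> \<le> r" using True by (metis of_int_le_iff)
    have "(of_int \<lfloor>r\<rfloor> :: real) < of_int \<lfloor>t\<rfloor> + 2" using f2 tt True by linarith
    then have "(of_int \<lfloor>r\<rfloor> :: real) < of_int (\<lfloor>t\<rfloor> + 1) + 1" by simp
    then have "\<lfloor>r\<rfloor> \<le> \<lfloor>t\<rfloor> + 1" by (rule real_int_lt)
    then have "(of_int \<lfloor>r\<rfloor> :: real) \<le> of_int (\<lfloor>t\<rfloor> + 1)" by (metis of_int_le_iff)
    then show "r \<le> of_int \<lfloor>t\<rfloor> + 1" using True by simp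
  qed simp
next
  case False
  have lo: "of_int \<lfloor>r\<rfloor> < r" using False of_int_floor_le[of r] by linarith
  have hi: "r < of_int \<lfloor>r\<rfloor> + 1" by linarith
  show ?thesis
  proof (intro exI[of _ "min (r - of_int \<lfloor>r\<rfloor>) (of_int \<lfloor>r\<rfloor> + 1 - r)"] conjI allI impI)
    show "min (r - of_int \<lfloor>r\<rfloor>) (of_int \<lfloor>r\<rfloor> + 1 - r) > 0" using lo hi by simp
    fix t :: real assume t: "\<bar>t - r\<bar> < min (r - of_int \<lfloor>r\<rfloor>) (of_int \<lfloor>r\<rfloor> + 1 - r)"
    have "of_int \<lfloor>r\<rfloor> \<le> t" "t < of_int \<lfloor>r\<rfloor> + 1" using t by (auto simp: abs_less_iff)
    then have "\<lfloor>t\<rfloor> = \<lfloor>r\<rfloor>" by (intro floor_unique) auto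
    then show "of_int \<lfloor>t\<rfloor> \<le> r" "r \<le> of_int \<lfloor>t\<rfloor> + 1" using lo hi by auto
  qed
qed

lemma ints_close:
  fixes u :: real
  assumes "of_int k \<le> u" "u \<le> of_int k + 1" "of_int k' \<le> u" "u \<le> of_int k' + 1"
  shows "k \<le> k' + 1 \<and> k' \<le> k + 1"
proof -
  have "(of_int k :: real) \<le> of_int (k' + 1)" "(of_int k' :: real) \<le> of_int (k + 1)" using assms by auto
  then show ?thesis by (simp only: of_int_le_iff)
qed

lemma ints_half:
  assumes "(of_int k :: real) \<le> of_int c + 1/2" "(of_int c :: real) + 1/2 \<le> of_int k + 1"
  shows "k = c"
proof -
  have "(of_int k :: real) < of_int (c + 1)" "(of_int c :: real) < of_int (k + 1)" using assms by auto
  then have "k < c + 1" "c < k + 1" by (simp_all only: of_int_less_iff)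
  then show ?thesis by simp
qed

lemma st_near: "(st R)\<^sup>*\<^sup>* c k \<Longrightarrow> m \<notin> R \<Longrightarrow> m = k \<or> adjacent k m \<Longrightarrow> (st R)\<^sup>*\<^sup>* c m"
  by (metis rtranclp.rtrancl_into_rtrancl st_def)

lemma esc_topo:
  assumes finR: "finite R" and conn: "connected (- region_space R)" and Rb: "R \<subseteq> {a..<b} \<times> {a..<b}"
    and cR: "c \<notin> R"
  shows "esc R a b c"
proof (rule ccontr)
  assume ne: "\<not> esc R a b c"
  define S where "S = region_space R"
  define K where "K = {k. (st R)\<^sup>*\<^sup>* c k}"
  have memS: "\<And>p. p \<in> S \<longleftrightarrow> (\<exists>r\<in>R. p \<in> unit_square r)" unfolding S_def region_space_def by blast
  have KB: "K \<subseteq> {a..<b} \<times> {a..<b}"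
  proof
    fix k assume "k \<in> K"
    then have r: "(st R)\<^sup>*\<^sup>* c k" unfolding K_def by simp
    show "k \<in> {a..<b} \<times> {a..<b}"
    proof (rule ccontr)
      assume "k \<notin> {a..<b} \<times> {a..<b}"
      then have "esc R a b k" by (rule esc.out)
      then show False using st_esc[OF r _ cR] ne by blast
    qed
  qed
  have finK: "finite K" using KB by (rule finite_subset) simp
  define A where "A = - S \<inter> (\<Union>k\<in>K. unit_square k)"
  have op: "openin (top_of_set (- S)) A"
    unfolding openin_euclidean_subtopology_iff
  proof (intro conjI ballI)
    show "A \<subseteq> - S" unfolding A_def by blast
    fix x assume xA: "x \<in> A"
    then obtain k where k: "k \<in> K" "x \<in> unit_square k" and xS: "x \<notin> S" unfolding A_def by blast
    obtain e1 where e1: "e1 > 0" "\<forall>t. \<bar>t - fst x\<bar> < e1 \<longrightarrow> of_int \<lfloor>t\<rfloor> \<le> fst x \<and> fst x \<le> of_int \<lfloor>t\<rfloor> + 1"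
      using near_floor by blast
    obtain e2 where e2: "e2 > 0" "\<forall>t. \<bar>t - snd x\<bar> < e2 \<longrightarrow> of_int \<lfloor>t\<rfloor> \<le> snd x \<and> snd x \<le> of_int \<lfloor>t\<rfloor> + 1"
      using near_floor by blast
    show "\<exists>e>0. \<forall>x'\<in>- S. dist x' x < e \<longrightarrow> x' \<in> A"
    proof (intro exI[of _ "min e1 e2"] conjI ballI impI)
      show "min e1 e2 > 0" using e1 e2 by simp
      fix x' assume x'S: "x' \<in> - S" and d: "dist x' x < min e1 e2"
      have d1: "\<bar>fst x' - fst x\<bar> < e1" using dist_fst_le[of x' x] d by (simp add: dist_real_def)
      have d2: "\<bar>snd x' - snd x\<bar> < e2" using dist_snd_le[of x' x] d by (simp add: dist_real_def)
      define k' where "k' = (\<lfloor>fst x'\<rfloor>, \<lfloor>snd x'\<rfloor>)"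
      have x'k': "x' \<in> unit_square k'" unfolding k'_def mem_us fst_conv snd_conv
        by (intro conjI; linarith)
      have xk': "x \<in> unit_square k'" unfolding k'_def mem_us using e1(2) d1 e2(2) d2 by auto
      define m where "m = (fst k', snd k)"
      have xm: "x \<in> unit_square m" using xk' k(2) unfolding m_def mem_us by auto
      have mR: "m \<notin> R" using xm xS memS by blast
      have k'R: "k' \<notin> R" using x'k' x'S memS by blast
      have c1: "fst k \<le> fst k' + 1 \<and> fst k' \<le> fst k + 1"
        using k(2) xk' unfolding mem_us by (intro ints_close[of _ "fst x"]) auto
      have c2: "snd m \<le> snd k' + 1 \<and> snd k' \<le> snd m + 1"
        using xm xk' unfolding mem_us by (intro ints_close[of _ "snd x"]) auto
      have km: "m = k \<or> adjacent k m"
      proof (cases "fst k' = fst k")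
        case True then show ?thesis unfolding m_def by (cases k) auto
      next
        case False then show ?thesis using c1 unfolding m_def adjacent_def by (cases k) auto
      qed
      have mk': "k' = m \<or> adjacent m k'"
      proof (cases "snd k' = snd m")
        case True then show ?thesis unfolding m_def by (cases k') auto
      next
        case False then show ?thesis using c2 unfolding m_def adjacent_def by (cases k') auto
      qed
      have "(st R)\<^sup>*\<^sup>* c k" using k(1) unfolding K_def by simp
      then have "(st R)\<^sup>*\<^sup>* c m" using st_near mR km by blast
      then have "(st R)\<^sup>*\<^sup>* c k'" using st_near k'R mk' by blast
      then have "k' \<in> K" unfolding K_def by simp
      then show "x' \<in> A" unfolding A_def using x'k' x'S by blast
    qed
  qed
  have cl: "closedin (top_of_set (- S)) A"
    unfolding A_def by (rule closedin_closed_Int) (use finK in \<open>auto simp: unit_square_def intro!: closed_UN\<close>)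
  have cK: "c \<in> K" unfolding K_def by simp
  define pc where "pc = (of_int (fst c) + 1/2 :: real, of_int (snd c) + 1/2 :: real)"
  have pcc: "pc \<in> unit_square c" unfolding pc_def mem_us by simp
  have pcS: "pc \<notin> S"
  proof
    assume "pc \<in> S"
    then obtain r where r: "r \<in> R" "pc \<in> unit_square r" using memS by blast
    then have "fst r = fst c" "snd r = snd c" unfolding pc_def mem_us by (auto intro: ints_half)
    then have "r = c" by (simp add: prod_eq_iff)
    then show False using r cR by simp
  qed
  have Ane: "A \<noteq> {}" unfolding A_def using pcc pcS cK by blast
  define q where "q = (of_int b + 1 :: real, of_int b + 1 :: real)"
  have far: "q \<notin> unit_square r" if "r \<in> {a..<b} \<times> {a..<b}" for r
  proof -
    have "fst r + 1 \<le> b" using that by auto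
    then have "(of_int (fst r + 1) :: real) \<le> of_int b" by (simp only: of_int_le_iff)
    then have "(of_int (fst r) :: real) + 1 \<le> of_int b" by simp
    then show ?thesis unfolding q_def mem_us by simp
  qed
  have qS: "q \<notin> S" using far Rb memS by blast
  have qA: "q \<notin> A" unfolding A_def using far KB by blast
  have "A = {} \<or> A = - S" using conn op cl unfolding connected_clopen S_def by blast
  then show False using Ane qS qA by blast
qed

theorem mainTheorem8:
  fixes R :: "cell set"
  assumes "finite R"
    and "no_holes (region_space R)"
  shows "(\<forall>T1 T2. T1 \<in> tilings R \<and> T2 \<in> tilings R \<and> T1 \<noteq> T2 \<longrightarrow>
            (ymono T1 - ymono T2 :: 'k::field ypoly) \<in> flip_ideal R)
         \<and> (tiling_ideal R :: 'k::field ypoly set) \<subseteq> flip_ideal R"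
proof -
  define N where "N = Max (insert 0 ((\<lambda>c. \<bar>fst c\<bar> + \<bar>snd c\<bar>) ` R))"
  have Nge: "\<bar>fst c\<bar> + \<bar>snd c\<bar> \<le> N" if "c \<in> R" for c
    unfolding N_def using assms(1) that by (intro Max_ge) auto
  have N0: "0 \<le> N" unfolding N_def using assms(1) by (intro Max_ge) auto
  define a where "a = - N"
  define b where "b = N + 1"
  have Rb: "R \<subseteq> {a..<b} \<times> {a..<b}"
  proof
    fix c assume "c \<in> R"
    then have "\<bar>fst c\<bar> + \<bar>snd c\<bar> \<le> N" by (rule Nge)
    then show "c \<in> {a..<b} \<times> {a..<b}" unfolding a_def b_def by (cases c) auto
  qed
  have ab: "a < b" using N0 unfolding a_def b_def by simp
  have conn: "connected (- region_space R)" by (rule conn_compl[OF assms])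
  interpret G: grid R a b
    by unfold_locales (use assms(1) Rb ab esc_topo[OF assms(1) conn Rb] in auto)
  have key: "(ymono T1 - ymono T2 :: 'k::field ypoly) \<in> flip_ideal R"
    if "T1 \<in> tilings R" "T2 \<in> tilings R" for T1 T2
    using rtr_ideal[OF assms(1) G.conn[OF that]] by blast
  show ?thesis
  proof
    show "\<forall>T1 T2. T1 \<in> tilings R \<and> T2 \<in> tilings R \<and> T1 \<noteq> T2 \<longrightarrow>
            (ymono T1 - ymono T2 :: 'k::field ypoly) \<in> flip_ideal R" using key by blast
    have "{ymono T1 - ymono T2 | T1 T2. T1 \<in> tilings R \<and> T2 \<in> tilings R} \<subseteq> (flip_ideal R :: 'k ypoly set)"
      using key by blast
    then have "gen_ideal {ymono T1 - ymono T2 | T1 T2. T1 \<in> tilings R \<and> T2 \<in> tilings R}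
        \<subseteq> (gen_ideal {ymono D1 - ymono D2 | D1 D2. (D1, D2) \<in> local_flips R} :: 'k ypoly set)"
      unfolding flip_ideal_def by (rule gen_ideal_sub)
    then show "(tiling_ideal R :: 'k::field ypoly set) \<subseteq> flip_ideal R"
      unfolding tiling_ideal_def flip_ideal_def .
  qed
qed

end
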